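(* Let $\|\cdot\|_{(i)}$, $i\in[k]$, be norms on a finite-dimensional real inner product space $V$ with dual norms $\|\cdot\|^\circ_{(i)}$, let $0\neq x_0\in V$, $\mu_i^\ast=1/\|x_0\|_{(i)}$ and $\|x\|_{\max,\mu^\ast}=\max_i\mu^\ast_i\|x\|_{(i)}$ (so $\|x_0\|_{\max,\mu^\ast}=1$). Then for every $g\in V$, $$\inf_{y\in\mathrm{cone}\,\partial\|\cdot\|_{\max,\mu^\ast}(x_0)}\|g-y\|_2=\inf_{y\in\sum_{i=1}^k\mathrm{cone}\,\partial\|\cdot\|_{(i)}(x_0)}\|g-y\|_2$$ and this equals $$\inf\Big\{\Big\|g-\sum_{i=1}^k x_i\Big\|_2:\ \tau_i\ge0,\ x_i\in V,\ \langle x_i,x_0\rangle=\tau_i\|x_0\|_{\max,\mu^\ast},\ \|x_i\|^\circ_{(i)}\le\tau_i\mu^\ast_i\ \forall i\Big\}.$$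
   Context: $\partial$ denotes the subdifferential; $\mathrm{cone}(S)=\{\tau x:x\in S,\tau>0\}$; sums of sets are Minkowski sums; the dual norm of $\|\cdot\|$ is $\|y\|^\circ=\sup_{\|x\|=1}|\langle x,y\rangle|$. *)

theory Defs
  imports "HOL-Analysis.Analysis"
begin

definition is_norm :: "('a::real_vector \<Rightarrow> real) \<Rightarrow> bool" where
  "is_norm N \<longleftrightarrow> (\<forall>x. 0 \<le> N x) \<and> (\<forall>x. N x = 0 \<longleftrightarrow> x = 0)
     \<and> (\<forall>c x. N (c *\<^sub>R x) = \<bar>c\<bar> * N x) \<and> (\<forall>x y. N (x + y) \<le> N x + N y)"

definition dual_norm :: "('a::real_inner \<Rightarrow> real) \<Rightarrow> 'a \<Rightarrow> real" where
  "dual_norm N y = Sup {\<bar>inner x y\<bar> | x. N x = 1}"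

definition subdifferential :: "('a::real_inner \<Rightarrow> real) \<Rightarrow> 'a \<Rightarrow> 'a set" where
  "subdifferential f x = {g. \<forall>y. f x + inner g (y - x) \<le> f y}"

definition pos_cone :: "'a::real_vector set \<Rightarrow> 'a set" where
  "pos_cone S = {\<tau> *\<^sub>R x | \<tau> x. \<tau> > 0 \<and> x \<in> S}"

end

theory Submission
  imports Defs
begin


lemma nz: "is_norm f \<Longrightarrow> f 0 = 0"
  unfolding is_norm_def by auto

lemma nscale: "is_norm f \<Longrightarrow> f (c *\<^sub>R x) = \<bar>c\<bar> * f x"
  unfolding is_norm_def by auto

lemma ntri: "is_norm f \<Longrightarrow> f (x + y) \<le> f x + f y"
  unfolding is_norm_def by auto

lemma nnonneg: "is_norm f \<Longrightarrow> 0 \<le> f x"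
  unfolding is_norm_def by auto

lemma npos: "is_norm f \<Longrightarrow> x \<noteq> 0 \<Longrightarrow> 0 < f x"
  unfolding is_norm_def by (metis order_le_less)

lemma nminus: "is_norm f \<Longrightarrow> f (- x) = f x"
  using nscale[of f "-1" x] by simp

lemma nconv: assumes "is_norm f" "0 \<le> u" "0 \<le> v" "u + v = 1"
  shows "f (u *\<^sub>R x + v *\<^sub>R y) \<le> u * f x + v * f y"
  using ntri[OF assms(1), of "u *\<^sub>R x" "v *\<^sub>R y"] nscale[OF assms(1), of u x] nscale[OF assms(1), of v y] assms
  by simp

lemma nsum: assumes "is_norm f" "finite A" shows "f (sum g A) \<le> (\<Sum>a\<in>A. f (g a))"
  using assms(2)
proof (induction A rule: finite_induct)
  case empty then show ?case using nz[OF assms(1)] by simp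
next
  case (insert a A)
  then show ?case using ntri[OF assms(1), of "g a" "sum g A"] by simp
qed

lemma nupper: fixes N :: "'a::euclidean_space \<Rightarrow> real"
  assumes "is_norm N" shows "N x \<le> (\<Sum>b\<in>Basis. N b) * norm x"
proof -
  have "N x = N (\<Sum>b\<in>Basis. (x \<bullet> b) *\<^sub>R b)" by (simp add: euclidean_representation)
  also have "\<dots> \<le> (\<Sum>b\<in>Basis. N ((x \<bullet> b) *\<^sub>R b))" by (rule nsum[OF assms]) simp
  also have "\<dots> = (\<Sum>b\<in>Basis. \<bar>x \<bullet> b\<bar> * N b)" using nscale[OF assms] by simp
  also have "\<dots> \<le> (\<Sum>b\<in>Basis. norm x * N b)"
    by (intro sum_mono mult_right_mono Basis_le_norm nnonneg[OF assms])
  finally have "N x \<le> (\<Sum>b\<in>Basis. N b * norm x)" by (simp add: mult.commute)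
  then show ?thesis by (simp add: sum_distrib_right)
qed

lemma ncont: fixes N :: "'a::euclidean_space \<Rightarrow> real"
  assumes "is_norm N" shows "continuous_on S N"
proof -
  let ?C = "\<Sum>b\<in>Basis. N b"
  have "?C-lipschitz_on S N"
    unfolding lipschitz_on_def
  proof (intro conjI ballI)
    show "0 \<le> ?C" by (intro sum_nonneg nnonneg[OF assms])
    fix x y
    have a: "N x \<le> N (x - y) + N y" using ntri[OF assms, of "x - y" y] by simp
    have b: "N y \<le> N (y - x) + N x" using ntri[OF assms, of "y - x" x] by simp
    have c: "N (y - x) = N (x - y)" using nminus[OF assms, of "x - y"] by simp
    have "dist (N x) (N y) \<le> N (x - y)" using a b c by (simp add: dist_real_def)
    also have "\<dots> \<le> ?C * norm (x - y)" by (rule nupper[OF assms])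
    finally show "dist (N x) (N y) \<le> ?C * dist x y" by (simp add: dist_norm)
  qed
  then show ?thesis by (rule lipschitz_on_continuous_on)
qed

lemma nlower: fixes N :: "'a::euclidean_space \<Rightarrow> real"
  assumes "is_norm N" shows "\<exists>m>0. \<forall>x. m * norm x \<le> N x"
proof -
  obtain b :: 'a where b: "b \<in> Basis" using nonempty_Basis by blast
  have ne: "sphere (0::'a) 1 \<noteq> {}" using b by (auto intro!: exI[of _ b])
  obtain x where x: "x \<in> sphere 0 1" and m: "\<forall>y\<in>sphere 0 1. N x \<le> N y"
    using continuous_attains_inf[OF compact_sphere ne ncont[OF assms]] by blast
  have "x \<noteq> 0" using x by auto
  then have pos: "0 < N x" by (rule npos[OF assms])
  have "N x * norm z \<le> N z" for z
  proof (cases "z = 0")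
    case True then show ?thesis using nz[OF assms] by simp
  next
    case False
    have "(1/norm z) *\<^sub>R z \<in> sphere 0 1" using False by simp
    then have "N x \<le> N ((1/norm z) *\<^sub>R z)" using m by blast
    also have "\<dots> = N z / norm z" using nscale[OF assms] by simp
    finally show ?thesis using False by (simp add: field_simps)
  qed
  then show ?thesis using pos by blast
qed




lemma subdiff_char: assumes f: "is_norm f"
  shows "s \<in> subdifferential f x0 \<longleftrightarrow> (\<forall>z. inner s z \<le> f z) \<and> inner s x0 = f x0"
proof
  assume "s \<in> subdifferential f x0"
  then have h: "\<And>y. f x0 + inner s (y - x0) \<le> f y" unfolding subdifferential_def by auto
  have 1: "f x0 - inner s x0 \<le> 0" using h[of 0] nz[OF f] by (simp add: inner_diff_right)
  have 2: "f x0 + inner s x0 \<le> 2 * f x0" using h[of "2 *\<^sub>R x0"] nscale[OF f, of 2 x0]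
    by (simp add: inner_diff_right algebra_simps)
  have e: "inner s x0 = f x0" using 1 2 by linarith
  have "inner s z \<le> f z" for z using h[of z] e by (simp add: inner_diff_right)
  then show "(\<forall>z. inner s z \<le> f z) \<and> inner s x0 = f x0" using e by blast
next
  assume "(\<forall>z. inner s z \<le> f z) \<and> inner s x0 = f x0"
  then show "s \<in> subdifferential f x0" unfolding subdifferential_def
    by (auto simp: inner_diff_right)
qed

lemma support: fixes f :: "'a::euclidean_space \<Rightarrow> real"
  assumes f: "is_norm f" and h: "\<forall>t\<ge>0. f x0 + t * c \<le> f (x0 + t *\<^sub>R d)"
  shows "\<exists>s\<in>subdifferential f x0. c \<le> inner s d"
proof -
  define S where "S = {(x0 + t *\<^sub>R d, f x0 + t * c) | t. t \<ge> 0}"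
  define T where "T = {p :: 'a \<times> real. f (fst p) < snd p}"
  have cS: "convex S" unfolding S_def
  proof (rule convexI)
    fix x y and u v :: real
    assume "x \<in> {(x0 + t *\<^sub>R d, f x0 + t * c) |t. 0 \<le> t}" "y \<in> {(x0 + t *\<^sub>R d, f x0 + t * c) |t. 0 \<le> t}"
      and uv: "0 \<le> u" "0 \<le> v" "u + v = 1"
    then obtain t1 t2 where t: "x = (x0 + t1 *\<^sub>R d, f x0 + t1 * c)" "y = (x0 + t2 *\<^sub>R d, f x0 + t2 * c)"
      "0 \<le> t1" "0 \<le> t2" by auto
    have "u *\<^sub>R x + v *\<^sub>R y = (x0 + (u * t1 + v * t2) *\<^sub>R d, f x0 + (u * t1 + v * t2) * c)"
    proof -
      have "u *\<^sub>R x + v *\<^sub>R y = ((u+v) *\<^sub>R x0 + (u * t1 + v * t2) *\<^sub>R d, (u+v) * f x0 + (u * t1 + v * t2) * c)"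
        using t by (simp add: algebra_simps scaleR_add_left)
      then show ?thesis using uv by simp
    qed
    moreover have "0 \<le> u * t1 + v * t2" using uv t by simp
    ultimately show "u *\<^sub>R x + v *\<^sub>R y \<in> {(x0 + t *\<^sub>R d, f x0 + t * c) |t. 0 \<le> t}" by blast
  qed
  have cT: "convex T" unfolding T_def
  proof (rule convexI)
    fix x y :: "'a \<times> real" and u v :: real
    assume x: "x \<in> {p. f (fst p) < snd p}" and y: "y \<in> {p. f (fst p) < snd p}"
      and uv: "0 \<le> u" "0 \<le> v" "u + v = 1"
    have a: "f (u *\<^sub>R fst x + v *\<^sub>R fst y) \<le> u * f (fst x) + v * f (fst y)"
      by (rule nconv[OF f uv])
    have b: "u * f (fst x) + v * f (fst y) < u * snd x + v * snd y"
    proof (cases "u = 0")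
      case True then show ?thesis using uv y by simp
    next
      case False
      then have "u * f (fst x) < u * snd x" using uv x by simp
      moreover have "v * f (fst y) \<le> v * snd y" using uv y by (simp add: mult_left_mono)
      ultimately show ?thesis by simp
    qed
    show "u *\<^sub>R x + v *\<^sub>R y \<in> {p. f (fst p) < snd p}" using a b by simp
  qed
  have ne1: "S \<noteq> {}" unfolding S_def by auto
  have ne2: "T \<noteq> {}" unfolding T_def by (auto intro!: exI[of _ 0] exI[of _ "f 0 + 1"])
  have dis: "S \<inter> T = {}" unfolding S_def T_def using h by force
  obtain a b where a: "a \<noteq> 0" and hS: "\<forall>x\<in>S. inner a x \<le> b" and hT: "\<forall>x\<in>T. inner a x \<ge> b"
    using separating_hyperplane_sets[OF cS cT ne1 ne2 dis] by blast
  obtain a1 \<beta> where ab: "a = (a1, \<beta>)" by (cases a)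
  have h1: "inner a1 (x0 + t *\<^sub>R d) + \<beta> * (f x0 + t * c) \<le> b" if "t \<ge> 0" for t
    using hS that unfolding S_def ab by auto
  have h2: "inner a1 z + \<beta> * r \<ge> b" if "f z < r" for z r
    using hT that unfolding T_def ab by auto
  have bge: "\<beta> \<ge> 0"
  proof (rule ccontr)
    assume "\<not> \<beta> \<ge> 0"
    then have neg: "\<beta> < 0" by simp
    have "f 0 < \<bar>b/\<beta>\<bar> + 1" using nz[OF f] by (simp add: add_nonneg_pos)
    then have "inner a1 0 + \<beta> * (\<bar>b/\<beta>\<bar> + 1) \<ge> b" by (rule h2)
    moreover have "\<beta> * \<bar>b/\<beta>\<bar> = - \<bar>b\<bar>" using neg by (simp add: abs_div) 
    moreover have "\<beta> * (\<bar>b/\<beta>\<bar> + 1) = \<beta> * \<bar>b/\<beta>\<bar> + \<beta>" by (simp only: distrib_left mult_1_right)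
    ultimately show False using neg by simp
  qed
  have bne: "\<beta> \<noteq> 0"
  proof
    assume b0: "\<beta> = 0"
    then have a1: "a1 \<noteq> 0" using a ab by (auto simp: zero_prod_def)
    define z where "z = (- (\<bar>b\<bar> + 1) / inner a1 a1) *\<^sub>R a1"
    have "f z < f z + 1" by simp
    then have "inner a1 z \<ge> b" using h2 b0 by fastforce
    moreover have "inner a1 z = - (\<bar>b\<bar> + 1)" using a1 unfolding z_def by simp
    ultimately show False by linarith
  qed
  have bpos: "\<beta> > 0" using bge bne by simp
  have h3: "inner a1 z + \<beta> * f z \<ge> b" for z
  proof -
    have "b \<le> inner a1 z + \<beta> * f z + e" if "e > 0" for e
    proof -
      have "f z < f z + e / \<beta>" using that bpos by simp
      then have "inner a1 z + \<beta> * (f z + e / \<beta>) \<ge> b" by (rule h2)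
      then show ?thesis using bpos by (simp add: distrib_left)
    qed
    then show ?thesis by (rule field_le_epsilon)
  qed
  have beq: "b = inner a1 x0 + \<beta> * f x0" using h1[of 0] h3[of x0] by simp
  define s where "s = (- 1 / \<beta>) *\<^sub>R a1"
  have "s \<in> subdifferential f x0"
    unfolding subdifferential_def
  proof (safe)
    fix y
    have "b \<le> inner a1 y + \<beta> * f y" by (rule h3)
    then have "\<beta> * (f x0 + inner s (y - x0)) \<le> \<beta> * f y"
      using bpos beq unfolding s_def by (simp add: inner_diff_right distrib_left right_diff_distrib)
    then show "f x0 + inner s (y - x0) \<le> f y" using bpos by simp
  qed
  moreover have "c \<le> inner s d"
  proof -
    have "inner a1 (x0 + 1 *\<^sub>R d) + \<beta> * (f x0 + 1 * c) \<le> b" by (rule h1) simp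
    then have "\<beta> * c \<le> - inner a1 d" using beq by (simp add: inner_add_right algebra_simps)
    then have "c \<le> - inner a1 d / \<beta>" using bpos by (simp add: field_simps)
    then show ?thesis unfolding s_def by simp
  qed
  ultimately show ?thesis by blast
qed




lemma subdiff_convex: "convex (subdifferential f x0)"
  unfolding subdifferential_def
proof (rule convexI, safe)
  fix g h :: 'a and u v :: real and y
  assume g: "\<forall>y. f x0 + inner g (y - x0) \<le> f y" and h: "\<forall>y. f x0 + inner h (y - x0) \<le> f y"
    and uv: "0 \<le> u" "0 \<le> v" "u + v = 1"
  have "u * (f x0 + inner g (y - x0)) + v * (f x0 + inner h (y - x0)) \<le> u * f y + v * f y"
    using g h uv by (intro add_mono mult_left_mono) auto
  moreover have "u * f x0 + v * f x0 = f x0" using uv by (metis distrib_right mult_1)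
  moreover have "u * f y + v * f y = f y" using uv by (metis distrib_right mult_1)
  ultimately show "f x0 + inner (u *\<^sub>R g + v *\<^sub>R h) (y - x0) \<le> f y"
    using uv by (simp add: inner_add_left inner_diff_right algebra_simps)
qed

lemma subdiff_compact: fixes f :: "'a::euclidean_space \<Rightarrow> real"
  assumes f: "is_norm f" shows "compact (subdifferential f x0)"
proof -
  have cl: "closed (subdifferential f x0)"
  proof -
    have "subdifferential f x0 = (\<Inter>y. {g. f x0 + inner g (y - x0) \<le> f y})"
      unfolding subdifferential_def by auto
    moreover have "closed {g. f x0 + inner g (y - x0) \<le> f y}" for y
      by (intro closed_Collect_le continuous_intros)
    ultimately show ?thesis by auto
  qed
  let ?C = "\<Sum>b\<in>Basis. f b"
  have "norm s \<le> ?C" if "s \<in> subdifferential f x0" for s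
  proof -
    have "inner s s \<le> f s" using that subdiff_char[OF f] by blast
    also have "\<dots> \<le> ?C * norm s" by (rule nupper[OF f])
    finally have "norm s * norm s \<le> ?C * norm s" by (simp add: power2_norm_eq_inner[symmetric] power2_eq_square)
    then show ?thesis by (cases "norm s = 0") (auto simp: sum_nonneg nnonneg[OF f])
  qed
  then have "bounded (subdifferential f x0)" unfolding bounded_iff by blast
  then show ?thesis using cl by (simp add: compact_eq_bounded_closed)
qed

lemma subdiff_ne: fixes f :: "'a::euclidean_space \<Rightarrow> real"
  assumes f: "is_norm f" shows "\<exists>s. s \<in> subdifferential f x0"
  using support[OF f, of x0 0 0] by auto

lemma maxrule: fixes F :: "nat \<Rightarrow> 'a::euclidean_space \<Rightarrow> real"
  assumes I: "finite I" "I \<noteq> {}" and F: "\<forall>i\<in>I. is_norm (F i)" and F1: "\<forall>i\<in>I. F i x0 = 1"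
    and y: "y \<in> subdifferential (\<lambda>x. Max ((\<lambda>i. F i x) ` I)) x0"
  shows "\<exists>l s. (\<forall>i\<in>I. l i \<ge> 0 \<and> s i \<in> subdifferential (F i) x0) \<and> sum l I = 1
     \<and> y = (\<Sum>i\<in>I. l i *\<^sub>R s i)"
proof -
  define A where "A i = subdifferential (F i) x0" for i
  define C where "C = convex hull (\<Union>(A ` I))"
  have Aprop: "\<forall>i\<in>I. convex (A i) \<and> A i \<noteq> {}"
    unfolding A_def using subdiff_convex subdiff_ne F by blast
  have "compact C" unfolding C_def
    using F I by (intro compact_convex_hull compact_UN) (auto simp: A_def subdiff_compact)
  then have clC: "closed C" by (rule compact_imp_closed)
  have "y \<in> C"
  proof (rule ccontr)
    assume yC: "y \<notin> C"
    obtain a b where ab: "inner a y < b" "\<forall>x\<in>C. inner a x > b"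
      using separating_hyperplane_closed_point[OF _ clC yC] unfolding C_def by auto
    define d where "d = - a"
    have "\<exists>t>0. F i (x0 + t *\<^sub>R d) < 1 + t * inner y d" if i: "i \<in> I" for i
    proof (rule ccontr)
      assume "\<not> ?thesis"
      then have "\<forall>t\<ge>0. F i x0 + t * inner y d \<le> F i (x0 + t *\<^sub>R d)"
        using F1 i by (metis add_0_right le_less mult_zero_left not_le scaleR_zero_left)
      then obtain s where s: "s \<in> A i" "inner y d \<le> inner s d"
        using support[of "F i"] F i unfolding A_def by blast
      have "s \<in> C" unfolding C_def using s i by (meson UN_I hull_inc)
      then have "inner a s > b" using ab by blast
      moreover have "inner s a \<le> inner y a" using s(2) unfolding d_def by simp
      ultimately show False using ab(1) by (simp add: inner_commute)
    qed
    then obtain t where t: "\<forall>i\<in>I. t i > 0 \<and> F i (x0 + t i *\<^sub>R d) < 1 + t i * inner y d"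
      by metis
    define tm where "tm = Min (t ` I)"
    have tm: "tm > 0" "\<forall>i\<in>I. tm \<le> t i" unfolding tm_def using t I by auto
    have lt: "F i (x0 + tm *\<^sub>R d) < 1 + tm * inner y d" if i: "i \<in> I" for i
    proof -
      define \<theta> where "\<theta> = tm / t i"
      have th: "0 < \<theta>" "\<theta> \<le> 1" unfolding \<theta>_def using tm t i by auto
      have "t i > 0" using t i by blast
      then have tt: "\<theta> * t i = tm" unfolding \<theta>_def by simp
      have "(1 - \<theta>) *\<^sub>R x0 + \<theta> *\<^sub>R (x0 + t i *\<^sub>R d) = x0 + (\<theta> * t i) *\<^sub>R d"
        by (simp add: algebra_simps)
      then have eq: "x0 + tm *\<^sub>R d = (1 - \<theta>) *\<^sub>R x0 + \<theta> *\<^sub>R (x0 + t i *\<^sub>R d)"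
        using tt by simp
      have "F i (x0 + tm *\<^sub>R d) \<le> (1 - \<theta>) * F i x0 + \<theta> * F i (x0 + t i *\<^sub>R d)"
        unfolding eq using F i th by (intro nconv) auto
      also have "\<dots> < (1 - \<theta>) * 1 + \<theta> * (1 + t i * inner y d)"
        using F1 i t th by simp
      also have "\<dots> = 1 + (\<theta> * t i) * inner y d" by (simp add: algebra_simps)
      also have "\<dots> = 1 + tm * inner y d" using tt by simp
      finally show ?thesis .
    qed
    have "Max ((\<lambda>i. F i (x0 + tm *\<^sub>R d)) ` I) < 1 + tm * inner y d"
      using lt I by simp
    moreover have "Max ((\<lambda>i. F i x0) ` I) = 1"
    proof -
      have "(\<lambda>i. F i x0) ` I = {1}" using F1 I by auto
      then show ?thesis by simp
    qed
    moreover have "Max ((\<lambda>i. F i x0) ` I) + inner y ((x0 + tm *\<^sub>R d) - x0)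
        \<le> Max ((\<lambda>i. F i (x0 + tm *\<^sub>R d)) ` I)"
      using y unfolding subdifferential_def by blast
    ultimately show False by simp
  qed
  then show ?thesis unfolding C_def convex_hull_finite_union[OF I(1) Aprop] A_def by blast
qed




lemma nscaled: "is_norm f \<Longrightarrow> c > 0 \<Longrightarrow> is_norm (\<lambda>x. c * f x)"
  unfolding is_norm_def by (auto simp: distrib_left[symmetric] mult_left_mono)

lemma subdiff_scaled: assumes "c > 0" "s \<in> subdifferential (\<lambda>x. c * f x) x0"
  shows "(1/c) *\<^sub>R s \<in> subdifferential f x0"
  unfolding subdifferential_def
proof safe
  fix y
  have "c * f x0 + inner s (y - x0) \<le> c * f y" using assms(2) unfolding subdifferential_def by auto
  then have "c * (f x0 + inner ((1/c) *\<^sub>R s) (y - x0)) \<le> c * f y"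
    using assms(1) by (simp add: distrib_left)
  then show "f x0 + inner ((1/c) *\<^sub>R s) (y - x0) \<le> f y" using assms(1) by simp
qed

lemma dual_char: fixes N :: "'a::euclidean_space \<Rightarrow> real"
  assumes N: "is_norm N" and x0: "x0 \<noteq> 0"
  shows "(x \<in> pos_cone (subdifferential N x0) \<or> x = 0) \<longleftrightarrow>
    (\<exists>\<tau>. \<tau> \<ge> 0 \<and> inner x x0 = \<tau> * 1 \<and> dual_norm N x \<le> \<tau> * (1 / N x0))"
proof -
  have Nx0: "N x0 > 0" using npos[OF N x0] .
  obtain m where m: "m > 0" "\<And>z. m * norm z \<le> N z" using nlower[OF N] by blast
  define X where "X = {\<bar>inner z x\<bar> | z. N z = 1}"
  have D: "dual_norm N x = Sup X" unfolding X_def dual_norm_def by simp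
  have Xne: "X \<noteq> {}"
  proof -
    have "N ((1 / N x0) *\<^sub>R x0) = 1" using Nx0 nscale[OF N] by simp
    then show ?thesis unfolding X_def by blast
  qed
  have Xbdd: "bdd_above X"
  proof (rule bdd_aboveI)
    fix w assume "w \<in> X"
    then obtain z where z: "w = \<bar>inner z x\<bar>" "N z = 1" unfolding X_def by blast
    have nz: "norm z \<le> 1 / m" using m(2)[of z] z(2) m(1) by (simp add: field_simps)
    have "w \<le> norm z * norm x" using z(1) Cauchy_Schwarz_ineq2 by simp
    also have "\<dots> \<le> (1/m) * norm x" using mult_right_mono[OF nz norm_ge_zero[of x]] by simp
    finally show "w \<le> (1/m) * norm x" .
  qed
  have U: "\<bar>inner z x\<bar> \<le> dual_norm N x" if "N z = 1" for z
    unfolding D using that Xbdd by (intro cSup_upper) (auto simp: X_def)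
  have L: "dual_norm N x \<le> B" if "\<And>z. N z = 1 \<Longrightarrow> \<bar>inner z x\<bar> \<le> B" for B
    unfolding D using that Xne by (intro cSup_least) (auto simp: X_def)
  show ?thesis
  proof
    assume "x \<in> pos_cone (subdifferential N x0) \<or> x = 0"
    then show "\<exists>\<tau>. \<tau> \<ge> 0 \<and> inner x x0 = \<tau> * 1 \<and> dual_norm N x \<le> \<tau> * (1 / N x0)"
    proof
      assume "x = 0"
      then have "dual_norm N x \<le> 0" by (intro L) simp
      then show ?thesis using \<open>x = 0\<close> by (intro exI[of _ 0]) simp
    next
      assume "x \<in> pos_cone (subdifferential N x0)"
      then obtain t s where ts: "x = t *\<^sub>R s" "t > 0" "s \<in> subdifferential N x0"
        unfolding pos_cone_def by blast
      have s1: "\<And>z. inner s z \<le> N z" and s2: "inner s x0 = N x0"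
        using ts(3) subdiff_char[OF N] by auto
      have "dual_norm N x \<le> t"
      proof (rule L)
        fix z assume z: "N z = 1"
        have a: "inner s z \<le> 1" using s1[of z] z by simp
        have b: "- inner s z \<le> 1" using s1[of "-z"] z nminus[OF N, of z] by simp
        have "\<bar>inner z x\<bar> = t * \<bar>inner s z\<bar>" using ts(1,2) by (simp add: inner_commute abs_mult)
        also have "\<dots> \<le> t * 1" using a b ts(2) by (intro mult_left_mono) auto
        finally show "\<bar>inner z x\<bar> \<le> t" by simp
      qed
      then show ?thesis using ts Nx0 s2
        by (intro exI[of _ "t * N x0"]) (auto simp: inner_commute)
    qed
  next
    assume "\<exists>\<tau>. \<tau> \<ge> 0 \<and> inner x x0 = \<tau> * 1 \<and> dual_norm N x \<le> \<tau> * (1 / N x0)"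
    then obtain \<tau> where tau: "\<tau> \<ge> 0" "inner x x0 = \<tau>" "dual_norm N x \<le> \<tau> / N x0" by auto
    show "x \<in> pos_cone (subdifferential N x0) \<or> x = 0"
    proof (cases "\<tau> = 0")
      case True
      have "x = 0"
      proof (rule ccontr)
        assume xne: "x \<noteq> 0"
        have Nx: "N x > 0" using npos[OF N xne] .
        have "N ((1 / N x) *\<^sub>R x) = 1" using Nx nscale[OF N] by simp
        then have "\<bar>inner ((1 / N x) *\<^sub>R x) x\<bar> \<le> dual_norm N x" by (rule U)
        also have "\<dots> \<le> 0" using tau True by simp
        finally have "\<bar>inner ((1 / N x) *\<^sub>R x) x\<bar> \<le> 0" .
        then have h: "(1 / N x) * inner x x \<le> 0"
          using abs_ge_self[of "inner ((1 / N x) *\<^sub>R x) x"] by (simp only: inner_scaleR_left)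
        have "0 < (1 / N x) * inner x x" using Nx xne by (intro mult_pos_pos) auto
        then show False using h by linarith
      qed
      then show ?thesis by simp
    next
      case False
      define t where "t = \<tau> / N x0"
      have t: "t > 0" using False tau Nx0 unfolding t_def by simp
      define s where "s = (1/t) *\<^sub>R x"
      have "s \<in> subdifferential N x0"
        unfolding subdiff_char[OF N]
      proof
        show "\<forall>z. inner s z \<le> N z"
        proof
          fix z
          show "inner s z \<le> N z"
          proof (cases "z = 0")
            case True then show ?thesis using nz[OF N] unfolding s_def by simp
          next
            case False
            have Nz: "N z > 0" using npos[OF N False] .
            have "N ((1 / N z) *\<^sub>R z) = 1" using Nz nscale[OF N] by simp
            then have "\<bar>inner ((1 / N z) *\<^sub>R z) x\<bar> \<le> dual_norm N x" by (rule U)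
            also have "\<dots> \<le> t" using tau unfolding t_def by simp
            finally have h: "\<bar>inner z x\<bar> / \<bar>N z\<bar> \<le> t" by simp
            have "inner z x / N z \<le> \<bar>inner z x\<bar> / \<bar>N z\<bar>" using Nz by (simp add: divide_right_mono)
            then have "inner z x / N z \<le> t" using h by linarith
            then have "inner z x \<le> t * N z" using Nz by (simp add: field_simps)
            then show ?thesis unfolding s_def using t by (simp add: field_simps inner_commute)
          qed
        qed
        show "inner s x0 = N x0" unfolding s_def t_def using tau Nx0 False by simp
      qed
      moreover have "x = t *\<^sub>R s" unfolding s_def using t by simp
      ultimately show ?thesis unfolding pos_cone_def using t by blast
    qed
  qed
qed




theorem mainTheorem9:
  fixes N :: "nat \<Rightarrow> 'a::euclidean_space \<Rightarrow> real"
    and k :: nat and x0 g :: 'a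
  assumes k: "k \<ge> 1"
    and norms: "\<forall>i\<in>{1..k}. is_norm (N i)"
    and x0: "x0 \<noteq> 0"
  defines "\<mu> \<equiv> (\<lambda>i. 1 / N i x0)"
  defines "Nmax \<equiv> (\<lambda>x. Max ((\<lambda>i. \<mu> i * N i x) ` {1..k}))"
  shows "Inf ((\<lambda>y. norm (g - y)) ` pos_cone (subdifferential Nmax x0))
           = Inf ((\<lambda>y. norm (g - y)) `
               {\<Sum>i\<in>{1..k}. x i | x. \<forall>i\<in>{1..k}. x i \<in> pos_cone (subdifferential (N i) x0)})
       \<and> Inf ((\<lambda>y. norm (g - y)) `
               {\<Sum>i\<in>{1..k}. x i | x. \<forall>i\<in>{1..k}. x i \<in> pos_cone (subdifferential (N i) x0)})
           = Inf {norm (g - (\<Sum>i\<in>{1..k}. x i)) | x \<tau>.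
               \<forall>i\<in>{1..k}. \<tau> i \<ge> 0 \<and> inner (x i) x0 = \<tau> i * Nmax x0
                  \<and> dual_norm (N i) (x i) \<le> \<tau> i * \<mu> i}"
proof -
  define I where "I = {1..k}"
  have I: "finite I" "I \<noteq> {}" unfolding I_def using k by auto
  have NI: "\<forall>i\<in>I. is_norm (N i)" using norms unfolding I_def .
  have Npos: "N i x0 > 0" if "i \<in> I" for i using npos[of "N i" x0] NI that x0 by blast
  have mupos: "\<mu> i > 0" if "i \<in> I" for i using Npos[OF that] unfolding \<mu>_def by simp
  have mu1: "\<mu> i * N i x0 = 1" if "i \<in> I" for i using Npos[OF that] unfolding \<mu>_def by simp
  have Nmax1: "Nmax x0 = 1"
  proof -
    have "(\<lambda>i. \<mu> i * N i x0) ` I = {1}" using mu1 I by auto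
    then show ?thesis unfolding Nmax_def I_def[symmetric] by simp
  qed
  have Nmax_ge: "\<mu> i * N i z \<le> Nmax z" if "i \<in> I" for i z
    unfolding Nmax_def I_def[symmetric] using that I by (intro Max_ge) auto
  define Dg where "Dg = (\<lambda>y. norm (g - y))"
  define P where "P = pos_cone (subdifferential Nmax x0)"
  define S where "S = {\<Sum>i\<in>I. x i | x. \<forall>i\<in>I. x i \<in> pos_cone (subdifferential (N i) x0)}"
  define Z where "Z = {\<Sum>i\<in>I. x i | x. \<forall>i\<in>I. x i \<in> pos_cone (subdifferential (N i) x0) \<or> x i = 0}"
  define R where "R = {norm (g - (\<Sum>i\<in>{1..k}. x i)) | x \<tau>.
               \<forall>i\<in>{1..k}. \<tau> i \<ge> 0 \<and> inner (x i) x0 = \<tau> i * Nmax x0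
                  \<and> dual_norm (N i) (x i) \<le> \<tau> i * \<mu> i}"
  have "\<forall>i\<in>I. \<exists>s. s \<in> subdifferential (N i) x0" using subdiff_ne NI by blast
  note exf0 = this
  obtain sg where sg: "\<forall>i\<in>I. sg i \<in> subdifferential (N i) x0"
    using bchoice[OF exf0] by blast
  have bdd: "bdd_below (Dg ` X)" for X unfolding Dg_def by (rule bdd_belowI[of _ 0]) auto
  have RZ: "R = Dg ` Z"
  proof
    show "R \<subseteq> Dg ` Z"
    proof
      fix r assume "r \<in> R"
      then obtain x \<tau> where r: "r = norm (g - (\<Sum>i\<in>I. x i))"
        and h: "\<forall>i\<in>I. \<tau> i \<ge> 0 \<and> inner (x i) x0 = \<tau> i * 1 \<and> dual_norm (N i) (x i) \<le> \<tau> i * (1 / N i x0)"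
        unfolding R_def I_def[symmetric] Nmax1 \<mu>_def by blast
      have "\<forall>i\<in>I. x i \<in> pos_cone (subdifferential (N i) x0) \<or> x i = 0"
      proof
        fix i assume i: "i \<in> I"
        have n: "is_norm (N i)" using NI i by blast
        show "x i \<in> pos_cone (subdifferential (N i) x0) \<or> x i = 0"
          using dual_char[OF n x0, of "x i"] h i by blast
      qed
      then show "r \<in> Dg ` Z" unfolding r Z_def Dg_def by blast
    qed
  next
    show "Dg ` Z \<subseteq> R"
    proof
      fix r assume "r \<in> Dg ` Z"
      then obtain x where r: "r = norm (g - (\<Sum>i\<in>I. x i))"
        and h: "\<forall>i\<in>I. x i \<in> pos_cone (subdifferential (N i) x0) \<or> x i = 0"
        unfolding Z_def Dg_def by blast
      have "\<forall>i\<in>I. \<exists>\<tau>. \<tau> \<ge> 0 \<and> inner (x i) x0 = \<tau> * 1 \<and> dual_norm (N i) (x i) \<le> \<tau> * (1 / N i x0)"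
      proof
        fix i assume i: "i \<in> I"
        have n: "is_norm (N i)" using NI i by blast
        have "x i \<in> pos_cone (subdifferential (N i) x0) \<or> x i = 0" using h i by blast
        then show "\<exists>\<tau>. \<tau> \<ge> 0 \<and> inner (x i) x0 = \<tau> * 1 \<and> dual_norm (N i) (x i) \<le> \<tau> * (1 / N i x0)"
          using dual_char[OF n x0, of "x i"] by blast
      qed
      note exf1 = this
      obtain \<tau> where "\<forall>i\<in>I. \<tau> i \<ge> 0 \<and> inner (x i) x0 = \<tau> i * 1 \<and> dual_norm (N i) (x i) \<le> \<tau> i * (1 / N i x0)"
        using bchoice[OF exf1] by blast
      then show "r \<in> R" unfolding R_def I_def[symmetric] Nmax1 \<mu>_def r by blast
    qed
  qed
  have Sne: "S \<noteq> {}"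
  proof -
    have "\<forall>i\<in>I. sg i \<in> pos_cone (subdifferential (N i) x0)"
      using sg unfolding pos_cone_def by (metis (mono_tags, lifting) mem_Collect_eq scaleR_one zero_less_one)
    then show ?thesis unfolding S_def by blast
  qed
  have SP: "S \<subseteq> P"
  proof
    fix y assume "y \<in> S"
    then obtain x where y: "y = (\<Sum>i\<in>I. x i)" and hx: "\<forall>i\<in>I. x i \<in> pos_cone (subdifferential (N i) x0)"
      unfolding S_def by blast
    have "\<forall>i\<in>I. \<exists>t. \<exists>s. x i = t *\<^sub>R s \<and> t > 0 \<and> s \<in> subdifferential (N i) x0"
      using hx unfolding pos_cone_def by blast
    note exf2 = this
    obtain t where "\<forall>i\<in>I. \<exists>s. x i = t i *\<^sub>R s \<and> t i > 0 \<and> s \<in> subdifferential (N i) x0"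
      using bchoice[OF exf2] by blast
    note exf3 = this
    obtain s where ts: "\<forall>i\<in>I. x i = t i *\<^sub>R s i \<and> t i > 0 \<and> s i \<in> subdifferential (N i) x0"
      using bchoice[OF exf3] by blast
    have s1: "inner (s i) z \<le> N i z" "inner (s i) x0 = N i x0" if "i \<in> I" for i z
      using ts that subdiff_char[of "N i"] NI by auto
    define T where "T = (\<Sum>i\<in>I. t i * N i x0)"
    have Tpos: "T > 0" unfolding T_def using I ts Npos
      by (intro sum_pos) auto
    have "(1/T) *\<^sub>R y \<in> subdifferential Nmax x0"
      unfolding subdifferential_def
    proof safe
      fix z
      have "inner y (z - x0) = (\<Sum>i\<in>I. t i * inner (s i) (z - x0))"
        unfolding y using ts by (simp add: inner_sum_left)
      also have "\<dots> \<le> (\<Sum>i\<in>I. t i * (N i x0 * (Nmax z - 1)))"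
      proof (rule sum_mono)
        fix i assume i: "i \<in> I"
        have "inner (s i) (z - x0) = inner (s i) z - N i x0" using s1[OF i] by (simp add: inner_diff_right)
        also have "\<dots> \<le> N i z - N i x0" using s1[OF i] by simp
        also have "N i z = N i x0 * (\<mu> i * N i z)" using mu1[OF i] by (simp add: algebra_simps)
        also have "N i x0 * (\<mu> i * N i z) - N i x0 \<le> N i x0 * Nmax z - N i x0"
          using Nmax_ge[OF i] Npos[OF i] by simp
        finally have "inner (s i) (z - x0) \<le> N i x0 * (Nmax z - 1)" by (simp add: algebra_simps)
        then show "t i * inner (s i) (z - x0) \<le> t i * (N i x0 * (Nmax z - 1))"
          using ts i by (simp add: mult_left_mono)
      qed
      also have "\<dots> = T * (Nmax z - 1)" unfolding T_def by (simp add: sum_distrib_right mult.assoc)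
      finally have "inner y (z - x0) \<le> T * (Nmax z - 1)" .
      then have "inner ((1/T) *\<^sub>R y) (z - x0) \<le> Nmax z - 1" using Tpos by (simp add: field_simps)
      then show "Nmax x0 + inner ((1/T) *\<^sub>R y) (z - x0) \<le> Nmax z" using Nmax1 by simp
    qed
    moreover have "y = T *\<^sub>R ((1/T) *\<^sub>R y)" using Tpos by simp
    ultimately show "y \<in> P" unfolding P_def pos_cone_def using Tpos by blast
  qed
  have PZ: "P \<subseteq> Z"
  proof
    fix y assume "y \<in> P"
    then obtain \<tau> y' where ty: "y = \<tau> *\<^sub>R y'" "\<tau> > 0" "y' \<in> subdifferential Nmax x0"
      unfolding P_def pos_cone_def by blast
    have Fn: "\<forall>i\<in>I. is_norm ((\<lambda>i x. \<mu> i * N i x) i)" using NI mupos nscaled by auto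
    have F1: "\<forall>i\<in>I. (\<lambda>i x. \<mu> i * N i x) i x0 = 1" using mu1 by auto
    have y': "y' \<in> subdifferential (\<lambda>x. Max ((\<lambda>i. (\<lambda>i x. \<mu> i * N i x) i x) ` I)) x0"
      using ty(3) unfolding Nmax_def I_def by simp
    obtain l s where ls: "\<forall>i\<in>I. l i \<ge> 0 \<and> s i \<in> subdifferential (\<lambda>x. \<mu> i * N i x) x0"
      "y' = (\<Sum>i\<in>I. l i *\<^sub>R s i)"
      using maxrule[OF I Fn F1 y'] by auto
    define x where "x i = (\<tau> * l i) *\<^sub>R s i" for i
    have "y = (\<Sum>i\<in>I. x i)" unfolding ty(1) ls(2) x_def by (simp add: scaleR_sum_right)
    moreover have "x i \<in> pos_cone (subdifferential (N i) x0) \<or> x i = 0" if i: "i \<in> I" for i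
    proof (cases "l i = 0")
      case True then show ?thesis unfolding x_def by simp
    next
      case False
      then have lp: "l i > 0" using ls i by force
      have "(1 / \<mu> i) *\<^sub>R s i \<in> subdifferential (N i) x0"
        using subdiff_scaled[OF mupos[OF i]] ls i by blast
      moreover have "x i = (\<tau> * l i * \<mu> i) *\<^sub>R ((1 / \<mu> i) *\<^sub>R s i)"
        unfolding x_def using mupos[OF i] by simp
      moreover have "\<tau> * l i * \<mu> i > 0" using lp ty(2) mupos[OF i] by simp
      ultimately show ?thesis unfolding pos_cone_def by blast
    qed
    ultimately show "y \<in> Z" unfolding Z_def by blast
  qed
  have approx: "Inf (Dg ` S) \<le> Dg z" if z: "z \<in> Z" for z
  proof -
    obtain x where zx: "z = (\<Sum>i\<in>I. x i)" and hx: "\<forall>i\<in>I. x i \<in> pos_cone (subdifferential (N i) x0) \<or> x i = 0"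
      using z unfolding Z_def by blast
    define M where "M = (\<Sum>i\<in>I. norm (sg i))"
    have M0: "M \<ge> 0" unfolding M_def by (simp add: sum_nonneg)
    show ?thesis
    proof (rule field_le_epsilon)
      fix e :: real assume e: "e > 0"
      define \<epsilon> where "\<epsilon> = e / (M + 1)"
      have ep: "\<epsilon> > 0" unfolding \<epsilon>_def using e M0 by simp
      have epM: "\<epsilon> * M \<le> e"
      proof -
        have "\<epsilon> * M \<le> \<epsilon> * (M + 1)" using ep by simp
        also have "\<dots> = e" unfolding \<epsilon>_def using M0 by simp
        finally show ?thesis .
      qed
      define x' where "x' i = (if x i = 0 then \<epsilon> *\<^sub>R sg i else x i)" for i
      have "(\<Sum>i\<in>I. x' i) \<in> S"
      proof -
        have "x' i \<in> pos_cone (subdifferential (N i) x0)" if i: "i \<in> I" for i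
        proof (cases "x i = 0")
          case True then show ?thesis unfolding x'_def pos_cone_def using sg i ep by auto
        next
          case False then show ?thesis unfolding x'_def using hx i by auto
        qed
        then show ?thesis unfolding S_def by blast
      qed
      then have "Inf (Dg ` S) \<le> Dg (\<Sum>i\<in>I. x' i)" by (intro cInf_lower bdd) auto
      also have "\<dots> \<le> Dg z + norm ((\<Sum>i\<in>I. x' i) - z)"
      proof -
        have "g - (\<Sum>i\<in>I. x' i) = (g - z) - ((\<Sum>i\<in>I. x' i) - z)" by simp
        then show ?thesis unfolding Dg_def using norm_triangle_ineq4[of "g - z" "(\<Sum>i\<in>I. x' i) - z"] by simp
      qed
      also have "norm ((\<Sum>i\<in>I. x' i) - z) \<le> \<epsilon> * M"
      proof -
        have "(\<Sum>i\<in>I. x' i) - z = (\<Sum>i\<in>I. x' i - x i)" unfolding zx by (simp add: sum_subtractf)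
        also have "\<dots> = (\<Sum>i\<in>I. if x i = 0 then \<epsilon> *\<^sub>R sg i else 0)"
          by (rule sum.cong) (auto simp: x'_def)
        also have "norm \<dots> \<le> (\<Sum>i\<in>I. norm (if x i = 0 then \<epsilon> *\<^sub>R sg i else 0))" by (rule norm_sum)
        also have "\<dots> \<le> (\<Sum>i\<in>I. \<epsilon> * norm (sg i))" using ep by (intro sum_mono) auto
        also have "\<dots> = \<epsilon> * M" unfolding M_def by (simp add: sum_distrib_left)
        finally show ?thesis .
      qed
      finally show "Inf (Dg ` S) \<le> Dg z + e" using epM by simp
    qed
  qed
  have Zne: "Z \<noteq> {}" using Sne SP PZ by blast
  have Pne: "P \<noteq> {}" using Sne SP by blast
  have a1: "Inf (Dg ` Z) \<le> Inf (Dg ` P)" using Pne PZ by (intro cInf_superset_mono bdd) auto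
  have a2: "Inf (Dg ` P) \<le> Inf (Dg ` S)" using Sne SP by (intro cInf_superset_mono bdd) auto
  have a3: "Inf (Dg ` S) \<le> Inf (Dg ` Z)" using Zne approx by (intro cInf_greatest) auto
  have "Inf (Dg ` P) = Inf (Dg ` S) \<and> Inf (Dg ` S) = Inf R" using a1 a2 a3 RZ by simp
  then show ?thesis unfolding Dg_def P_def S_def R_def I_def .
qed


end
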